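(* Let $B\colon\mathbf{Set}\to\mathbf{Set}$ be a functor, $\Lambda$ a set, and $(\tau_\lambda\colon B[0,1]\to[0,1])_{\lambda\in\Lambda}$ arbitrary functions. For every coalgebra $\alpha\colon X\to BX$ and all $s,t\in X$, $d_\alpha(s,t)\ge d^L_\alpha(s,t)$.
   Context: Formulas: $\varphi::=\top\mid\neg\varphi\mid\min(\varphi_1,\varphi_2)\mid(\ominus q)\varphi\ (q\in\mathbb{Q}\cap[0,1])\mid\heartsuit_\lambda\varphi\ (\lambda\in\Lambda)$. Semantics $[\![\varphi]\!]_\alpha\colon X\to[0,1]$: $[\![\top]\!]=1$, $[\![\neg\varphi]\!]=1-[\![\varphi]\!]$, $[\![\min(\varphi_1,\varphi_2)]\!]=\min([\![\varphi_1]\!],[\![\varphi_2]\!])$, $[\![(\ominus q)\varphi]\!]=\max([\![\varphi]\!]-q,0)$ (pointwise), $[\![\heartsuit_\lambda\varphi]\!]=\tau_\lambda\circ B[\![\varphi]\!]\circ\alpha$. Logical distance: $d^L_\alpha(s,t)=\sup_\varphi|[\![\varphi]\!]_\alpha(s)-[\![\varphi]\!]_\alpha(t)|$. For a 1-bounded pseudometric $d$ on $X$, let $d_B$ on $BX$ be $d_B(t_1,t_2)=\sup_{\lambda\in\Lambda,h}|\tau_\lambda(Bh(t_1))-\tau_\lambda(Bh(t_2))|$, $h$ ranging over nonexpansive maps $(X,d)\to([0,1],d_e)$ with $d_e$ the Euclidean metric. The behavioral distance $d_\alpha$ is the pointwise least 1-bounded pseudometric $d$ on $X$ satisfying $d(s,t)=d_B(\alpha(s),\alpha(t))$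 for all $s,t$ (the greatest fixed point in the order $\sqsubseteq$ = pointwise $\ge$ on 1-bounded pseudometrics). *)

theory Defs
  imports Complex_Main
begin

(* The unit interval [0,1] is represented by the carrier {0..1} inside real.
   A Set-functor B is represented by its restriction to the objects X (type 'x)
   and [0,1]:  BX is the type 'bx, B[0,1] is the type 'bi, and
     Bxx f  : BX -> BX         for f : X -> X
     Bxi h  : BX -> B[0,1]     for h : X -> [0,1]
     Bii g  : B[0,1] -> B[0,1] for g : [0,1] -> [0,1]                     *)

definition is_functor_restr ::
  "(('x \<Rightarrow> 'x) \<Rightarrow> 'bx \<Rightarrow> 'bx) \<Rightarrow> (('x \<Rightarrow> real) \<Rightarrow> 'bx \<Rightarrow> 'bi)
    \<Rightarrow> ((real \<Rightarrow> real) \<Rightarrow> 'bi \<Rightarrow> 'bi) \<Rightarrow> bool" where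
  "is_functor_restr Bxx Bxi Bii \<longleftrightarrow>
     Bxx id = id \<and>
     (\<forall>f g. Bxx (g \<circ> f) = Bxx g \<circ> Bxx f) \<and>
     Bii id = id \<and>
     (\<forall>g g'. g ` {0..1} \<subseteq> {0..1} \<and> g' ` {0..1} \<subseteq> {0..1} \<and> (\<forall>r\<in>{0..1}. g r = g' r)
        \<longrightarrow> Bii g = Bii g') \<and>
     (\<forall>g g'. g ` {0..1} \<subseteq> {0..1} \<and> g' ` {0..1} \<subseteq> {0..1}
        \<longrightarrow> Bii (g' \<circ> g) = Bii g' \<circ> Bii g) \<and>
     (\<forall>h f. range h \<subseteq> {0..1} \<longrightarrow> Bxi (h \<circ> f) = Bxi h \<circ> Bxx f) \<and>
     (\<forall>h g. range h \<subseteq> {0..1} \<and> g ` {0..1} \<subseteq> {0..1}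
        \<longrightarrow> Bxi (g \<circ> h) = Bii g \<circ> Bxi h)"

datatype 'l form =
    FTop
  | FNeg "'l form"
  | FMin "'l form" "'l form"
  | FMinus rat "'l form"
  | FMod 'l "'l form"

fun wf_form :: "'l set \<Rightarrow> 'l form \<Rightarrow> bool" where
  "wf_form \<Lambda> FTop = True"
| "wf_form \<Lambda> (FNeg \<phi>) = wf_form \<Lambda> \<phi>"
| "wf_form \<Lambda> (FMin \<phi> \<psi>) = (wf_form \<Lambda> \<phi> \<and> wf_form \<Lambda> \<psi>)"
| "wf_form \<Lambda> (FMinus q \<phi>) = (0 \<le> q \<and> q \<le> 1 \<and> wf_form \<Lambda> \<phi>)"
| "wf_form \<Lambda> (FMod l \<phi>) = (l \<in> \<Lambda> \<and> wf_form \<Lambda> \<phi>)"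

fun sem :: "(('x \<Rightarrow> real) \<Rightarrow> 'bx \<Rightarrow> 'bi) \<Rightarrow> ('l \<Rightarrow> 'bi \<Rightarrow> real) \<Rightarrow> ('x \<Rightarrow> 'bx)
             \<Rightarrow> 'l form \<Rightarrow> 'x \<Rightarrow> real" where
  "sem Bxi \<tau> \<alpha> FTop = (\<lambda>x. 1)"
| "sem Bxi \<tau> \<alpha> (FNeg \<phi>) = (\<lambda>x. 1 - sem Bxi \<tau> \<alpha> \<phi> x)"
| "sem Bxi \<tau> \<alpha> (FMin \<phi> \<psi>) = (\<lambda>x. min (sem Bxi \<tau> \<alpha> \<phi> x) (sem Bxi \<tau> \<alpha> \<psi> x))"
| "sem Bxi \<tau> \<alpha> (FMinus q \<phi>) = (\<lambda>x. max (sem Bxi \<tau> \<alpha> \<phi> x - of_rat q) 0)"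
| "sem Bxi \<tau> \<alpha> (FMod l \<phi>) = (\<lambda>x. \<tau> l (Bxi (sem Bxi \<tau> \<alpha> \<phi>) (\<alpha> x)))"

definition logic_dist :: "'l set \<Rightarrow> (('x \<Rightarrow> real) \<Rightarrow> 'bx \<Rightarrow> 'bi) \<Rightarrow> ('l \<Rightarrow> 'bi \<Rightarrow> real)
     \<Rightarrow> ('x \<Rightarrow> 'bx) \<Rightarrow> 'x \<Rightarrow> 'x \<Rightarrow> real" where
  "logic_dist \<Lambda> Bxi \<tau> \<alpha> s t =
     (SUP \<phi> \<in> {\<phi>. wf_form \<Lambda> \<phi>}. \<bar>sem Bxi \<tau> \<alpha> \<phi> s - sem Bxi \<tau> \<alpha> \<phi> t\<bar>)"

definition bpm :: "('x \<Rightarrow> 'x \<Rightarrow> real) \<Rightarrow> bool" where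
  "bpm d \<longleftrightarrow> (\<forall>x. d x x = 0) \<and> (\<forall>x y. d x y = d y x) \<and>
     (\<forall>x y z. d x z \<le> d x y + d y z) \<and> (\<forall>x y. 0 \<le> d x y \<and> d x y \<le> 1)"

definition nonexp :: "('x \<Rightarrow> 'x \<Rightarrow> real) \<Rightarrow> ('x \<Rightarrow> real) \<Rightarrow> bool" where
  "nonexp d h \<longleftrightarrow> range h \<subseteq> {0..1} \<and> (\<forall>x y. \<bar>h x - h y\<bar> \<le> d x y)"

(* lifted distance d_B; supremum taken in [0,1] (empty sup = 0) *)
definition lift_dist :: "'l set \<Rightarrow> (('x \<Rightarrow> real) \<Rightarrow> 'bx \<Rightarrow> 'bi) \<Rightarrow> ('l \<Rightarrow> 'bi \<Rightarrow> real)
     \<Rightarrow> ('x \<Rightarrow> 'x \<Rightarrow> real) \<Rightarrow> 'bx \<Rightarrow> 'bx \<Rightarrow> real" where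
  "lift_dist \<Lambda> Bxi \<tau> d t1 t2 =
     (if \<Lambda> = {} then 0 else
      (SUP p \<in> \<Lambda> \<times> {h. nonexp d h}.
          \<bar>\<tau> (fst p) (Bxi (snd p) t1) - \<tau> (fst p) (Bxi (snd p) t2)\<bar>))"

definition is_fixpoint_pm :: "'l set \<Rightarrow> (('x \<Rightarrow> real) \<Rightarrow> 'bx \<Rightarrow> 'bi) \<Rightarrow> ('l \<Rightarrow> 'bi \<Rightarrow> real)
     \<Rightarrow> ('x \<Rightarrow> 'bx) \<Rightarrow> ('x \<Rightarrow> 'x \<Rightarrow> real) \<Rightarrow> bool" where
  "is_fixpoint_pm \<Lambda> Bxi \<tau> \<alpha> d \<longleftrightarrow>
     bpm d \<and> (\<forall>s t. d s t = lift_dist \<Lambda> Bxi \<tau> d (\<alpha> s) (\<alpha> t))"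

definition behav_dist :: "'l set \<Rightarrow> (('x \<Rightarrow> real) \<Rightarrow> 'bx \<Rightarrow> 'bi) \<Rightarrow> ('l \<Rightarrow> 'bi \<Rightarrow> real)
     \<Rightarrow> ('x \<Rightarrow> 'bx) \<Rightarrow> 'x \<Rightarrow> 'x \<Rightarrow> real" where
  "behav_dist \<Lambda> Bxi \<tau> \<alpha> = (THE d. is_fixpoint_pm \<Lambda> Bxi \<tau> \<alpha> d \<and>
      (\<forall>d'. is_fixpoint_pm \<Lambda> Bxi \<tau> \<alpha> d' \<longrightarrow> (\<forall>s t. d s t \<le> d' s t)))"

end

theory Submission
  imports Defs
begin

lemma lift_facts:
  assumes t01: "\<forall>l\<in>\<Lambda>. \<forall>b. \<tau> l b \<in> {0..1}"
    and d0: "\<forall>x y. 0 \<le> (d::'x \<Rightarrow> 'x \<Rightarrow> real) x y"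
  shows "\<And>l h. l \<in> \<Lambda> \<Longrightarrow> nonexp d h \<Longrightarrow>
           \<bar>\<tau> l (Bxi h a) - \<tau> l (Bxi h b)\<bar> \<le> lift_dist \<Lambda> Bxi \<tau> d a b"
    and "0 \<le> lift_dist \<Lambda> Bxi \<tau> d a b" and "lift_dist \<Lambda> Bxi \<tau> d a b \<le> 1"
proof -
  let ?S = "\<Lambda> \<times> {h. nonexp d h}"
  let ?f = "\<lambda>p. \<bar>\<tau> (fst p) (Bxi (snd p) a) - \<tau> (fst p) (Bxi (snd p) b)\<bar>"
  have le1: "?f p \<le> 1" if "p \<in> ?S" for p
  proof -
    have "fst p \<in> \<Lambda>" using that by auto
    then have "\<tau> (fst p) (Bxi (snd p) a) \<in> {0..1}" "\<tau> (fst p) (Bxi (snd p) b) \<in> {0..1}"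
      using t01 by auto
    then show ?thesis by auto
  qed
  have bdd: "bdd_above (?f ` ?S)" using le1 by (auto intro!: bdd_aboveI)
  have ne: "\<Lambda> \<noteq> {} \<Longrightarrow> ?S \<noteq> {}"
  proof -
    assume "\<Lambda> \<noteq> {}" then obtain l where "l \<in> \<Lambda>" by auto
    moreover have "nonexp d (\<lambda>_. 0)" using d0 by (auto simp: nonexp_def)
    ultimately show "?S \<noteq> {}" by auto
  qed
  show "\<And>l h. l \<in> \<Lambda> \<Longrightarrow> nonexp d h \<Longrightarrow>
           \<bar>\<tau> l (Bxi h a) - \<tau> l (Bxi h b)\<bar> \<le> lift_dist \<Lambda> Bxi \<tau> d a b"
  proof -
    fix l h assume "l \<in> \<Lambda>" "nonexp d h"
    then have "(l, h) \<in> ?S" by auto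
    from cSUP_upper[OF this bdd] show "\<bar>\<tau> l (Bxi h a) - \<tau> l (Bxi h b)\<bar> \<le> lift_dist \<Lambda> Bxi \<tau> d a b"
      using \<open>l \<in> \<Lambda>\<close> by (auto simp: lift_dist_def)
  qed
  show "0 \<le> lift_dist \<Lambda> Bxi \<tau> d a b"
  proof (cases "\<Lambda> = {}")
    case True then show ?thesis by (simp add: lift_dist_def)
  next
    case False
    then obtain p where "p \<in> ?S" using ne by auto
    have "0 \<le> ?f p" by simp
    also have "\<dots> \<le> (SUP p\<in>?S. ?f p)" by (rule cSUP_upper[OF \<open>p \<in> ?S\<close> bdd])
    finally show ?thesis using False by (simp add: lift_dist_def)
  qed
  show "lift_dist \<Lambda> Bxi \<tau> d a b \<le> 1"
  proof (cases "\<Lambda> = {}")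
    case True then show ?thesis by (simp add: lift_dist_def)
  next
    case False
    have "(SUP p\<in>?S. ?f p) \<le> 1" by (rule cSUP_least[OF ne[OF False] le1])
    then show ?thesis using False by (simp add: lift_dist_def)
  qed
qed

lemma lift_mono:
  assumes t01: "\<forall>l\<in>\<Lambda>. \<forall>b. \<tau> l b \<in> {0..1}"
    and d0: "\<forall>x y. 0 \<le> (d::'x \<Rightarrow> 'x \<Rightarrow> real) x y"
    and le: "\<forall>x y. d x y \<le> d' x y"
  shows "lift_dist \<Lambda> Bxi \<tau> d a b \<le> lift_dist \<Lambda> Bxi \<tau> d' a b"
proof (cases "\<Lambda> = {}")
  case True then show ?thesis by (simp add: lift_dist_def)
next
  case False
  let ?f = "\<lambda>p. \<bar>\<tau> (fst p) (Bxi (snd p) a) - \<tau> (fst p) (Bxi (snd p) b)\<bar>"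
  obtain l where l: "l \<in> \<Lambda>" using False by auto
  have n0: "nonexp d (\<lambda>_. 0)" using d0 by (auto simp: nonexp_def)
  have sub: "\<Lambda> \<times> {h. nonexp d h} \<subseteq> \<Lambda> \<times> {h. nonexp d' h}"
    using le by (auto simp: nonexp_def) (meson order_trans)
  have le1: "?f p \<le> 1" if "p \<in> \<Lambda> \<times> {h. nonexp d' h}" for p
  proof -
    have "fst p \<in> \<Lambda>" using that by auto
    then have "\<tau> (fst p) (Bxi (snd p) a) \<in> {0..1}" "\<tau> (fst p) (Bxi (snd p) b) \<in> {0..1}"
      using t01 by auto
    then show ?thesis by auto
  qed
  have bdd: "bdd_above (?f ` (\<Lambda> \<times> {h. nonexp d' h}))" using le1 by (auto intro!: bdd_aboveI)
  have "(SUP p\<in>\<Lambda> \<times> {h. nonexp d h}. ?f p) \<le> (SUP p\<in>\<Lambda> \<times> {h. nonexp d' h}. ?f p)"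
    by (rule cSUP_subset_mono) (use l n0 bdd sub in auto)
  then show ?thesis using False by (simp add: lift_dist_def)
qed

lemma lift_bpm:
  assumes t01: "\<forall>l\<in>\<Lambda>. \<forall>b. \<tau> l b \<in> {0..1}"
    and b: "bpm d"
  shows "bpm (\<lambda>s t. lift_dist \<Lambda> Bxi \<tau> d (\<alpha> s) (\<alpha> t))"
proof -
  have d0: "\<forall>x y. 0 \<le> d x y" using b by (auto simp: bpm_def)
  note F = lift_facts[OF t01 d0]
  let ?S = "\<Lambda> \<times> {h. nonexp d h}"
  have ne: "\<Lambda> \<noteq> {} \<Longrightarrow> ?S \<noteq> {}"
  proof -
    assume "\<Lambda> \<noteq> {}" then obtain l where "l \<in> \<Lambda>" by auto
    moreover have "nonexp d (\<lambda>_. 0)" using d0 by (auto simp: nonexp_def)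
    ultimately show "?S \<noteq> {}" by auto
  qed
  have refl: "lift_dist \<Lambda> Bxi \<tau> d a a = 0" for a
    unfolding lift_dist_def using ne by auto
  have sym: "lift_dist \<Lambda> Bxi \<tau> d a c = lift_dist \<Lambda> Bxi \<tau> d c a" for a c
    unfolding lift_dist_def by (simp add: abs_minus_commute)
  have tri: "lift_dist \<Lambda> Bxi \<tau> d a c \<le> lift_dist \<Lambda> Bxi \<tau> d a e + lift_dist \<Lambda> Bxi \<tau> d e c" for a c e
  proof (cases "\<Lambda> = {}")
    case True then show ?thesis by (simp add: lift_dist_def)
  next
    case False
    have "(SUP p\<in>?S. \<bar>\<tau> (fst p) (Bxi (snd p) a) - \<tau> (fst p) (Bxi (snd p) c)\<bar>)
          \<le> lift_dist \<Lambda> Bxi \<tau> d a e + lift_dist \<Lambda> Bxi \<tau> d e c"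
    proof (rule cSUP_least[OF ne[OF False]])
      fix p assume p: "p \<in> ?S"
      have "\<bar>\<tau> (fst p) (Bxi (snd p) a) - \<tau> (fst p) (Bxi (snd p) c)\<bar>
         \<le> \<bar>\<tau> (fst p) (Bxi (snd p) a) - \<tau> (fst p) (Bxi (snd p) e)\<bar>
           + \<bar>\<tau> (fst p) (Bxi (snd p) e) - \<tau> (fst p) (Bxi (snd p) c)\<bar>" by linarith
      also have "\<dots> \<le> lift_dist \<Lambda> Bxi \<tau> d a e + lift_dist \<Lambda> Bxi \<tau> d e c"
        using F(1)[of "fst p" "snd p"] p by (intro add_mono) auto
      finally show "\<bar>\<tau> (fst p) (Bxi (snd p) a) - \<tau> (fst p) (Bxi (snd p) c)\<bar>
         \<le> lift_dist \<Lambda> Bxi \<tau> d a e + lift_dist \<Lambda> Bxi \<tau> d e c" .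
    qed
    then show ?thesis using False by (simp add: lift_dist_def)
  qed
  show ?thesis unfolding bpm_def using refl sym tri F(2,3) by metis
qed

lemma sup_bpm:
  assumes ne: "S \<noteq> {}" and all: "\<forall>e\<in>S. bpm e"
  shows "bpm (\<lambda>x y. SUP e\<in>S. (e::'x \<Rightarrow> 'x \<Rightarrow> real) x y)"
proof -
  have le1: "e x y \<le> 1" "0 \<le> e x y" if "e \<in> S" for e x y using all that by (auto simp: bpm_def)
  have bdd: "bdd_above ((\<lambda>e. e x y) ` S)" for x y using le1 by (auto intro!: bdd_aboveI)
  have up: "e x y \<le> (SUP e\<in>S. e x y)" if "e \<in> S" for e x y by (rule cSUP_upper[OF that bdd])
  have "(SUP e\<in>S. e x x) = 0" for x
  proof -
    have "(SUP e\<in>S. e x x) = (SUP e\<in>S. (0::real))"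
      using all by (intro SUP_cong) (auto simp: bpm_def)
    then show ?thesis using ne by simp
  qed
  moreover have "(SUP e\<in>S. e x y) = (SUP e\<in>S. e y x)" for x y
    using all by (intro SUP_cong) (auto simp: bpm_def)
  moreover have "(SUP e\<in>S. e x z) \<le> (SUP e\<in>S. e x y) + (SUP e\<in>S. e y z)" for x y z
  proof (rule cSUP_least[OF ne])
    fix e assume e: "e \<in> S"
    have "e x z \<le> e x y + e y z" using all e by (auto simp: bpm_def)
    also have "\<dots> \<le> (SUP e\<in>S. e x y) + (SUP e\<in>S. e y z)" using up[OF e] by (intro add_mono)
    finally show "e x z \<le> (SUP e\<in>S. e x y) + (SUP e\<in>S. e y z)" .
  qed
  moreover have "0 \<le> (SUP e\<in>S. e x y)" "(SUP e\<in>S. e x y) \<le> 1" for x y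
  proof -
    obtain e where "e \<in> S" using ne by auto
    then show "0 \<le> (SUP e\<in>S. e x y)" using up le1 by (meson order_trans)
    show "(SUP e\<in>S. e x y) \<le> 1" using le1 by (intro cSUP_least[OF ne]) auto
  qed
  ultimately show ?thesis unfolding bpm_def by blast
qed

lemma least_fix_exists:
  fixes \<alpha> :: "'x \<Rightarrow> 'bx"
  assumes t01: "\<forall>l\<in>\<Lambda>. \<forall>b. \<tau> l b \<in> {0..1}"
  shows "\<exists>d. is_fixpoint_pm \<Lambda> Bxi \<tau> \<alpha> d \<and>
      (\<forall>d'. is_fixpoint_pm \<Lambda> Bxi \<tau> \<alpha> d' \<longrightarrow> (\<forall>s t. d s t \<le> d' s t))"
proof -
  define F where "F = (\<lambda>d s t. lift_dist \<Lambda> Bxi \<tau> d (\<alpha> s) (\<alpha> t))"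
  define Q where "Q = {d::'x\<Rightarrow>'x\<Rightarrow>real. bpm d \<and> (\<forall>s t. F d s t \<le> d s t)}"
  define L where "L = {e::'x\<Rightarrow>'x\<Rightarrow>real. bpm e \<and> (\<forall>d\<in>Q. \<forall>s t. e s t \<le> d s t)}"
  define D where "D = (\<lambda>x y. SUP e\<in>L. (e::'x \<Rightarrow> 'x \<Rightarrow> real) x y)"
  have Fbpm: "bpm d \<Longrightarrow> bpm (F d)" for d unfolding F_def by (rule lift_bpm[OF t01])
  have Fmono: "bpm d \<Longrightarrow> \<forall>x y. d x y \<le> d' x y \<Longrightarrow> F d s t \<le> F d' s t" for d d' s t
    unfolding F_def by (rule lift_mono[OF t01]) (auto simp: bpm_def)
  have z: "(\<lambda>x y. 0::real) \<in> L"
    unfolding L_def Q_def bpm_def by auto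
  have Lne: "L \<noteq> {}" using z by auto
  have Dbpm: "bpm D" unfolding D_def by (rule sup_bpm[OF Lne]) (auto simp: L_def)
  have bddL: "bdd_above ((\<lambda>e. e x y) ` L)" for x y
    by (rule bdd_aboveI[of _ 1]) (auto simp: L_def bpm_def)
  have Dle: "D s t \<le> d s t" if "d \<in> Q" for d s t
    unfolding D_def by (rule cSUP_least[OF Lne]) (use that in \<open>auto simp: L_def\<close>)
  have upL: "e s t \<le> D s t" if "e \<in> L" for e s t
    unfolding D_def by (rule cSUP_upper[OF that bddL])
  have FD_L: "F D \<in> L"
  proof -
    have "F D s t \<le> d s t" if "d \<in> Q" for d s t
    proof -
      have "F D s t \<le> F d s t" using Fmono[OF Dbpm] Dle[OF that] by blast
      also have "\<dots> \<le> d s t" using that by (auto simp: Q_def)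
      finally show ?thesis .
    qed
    then show ?thesis using Fbpm[OF Dbpm] by (auto simp: L_def)
  qed
  have FD_le: "F D s t \<le> D s t" for s t using upL[OF FD_L] .
  have FD_Q: "F D \<in> Q"
    using Fbpm[OF Dbpm] Fmono[OF Fbpm[OF Dbpm] ] FD_le unfolding Q_def by blast
  have D_le: "D s t \<le> F D s t" for s t using Dle[OF FD_Q] .
  have fixD: "is_fixpoint_pm \<Lambda> Bxi \<tau> \<alpha> D"
    unfolding is_fixpoint_pm_def using Dbpm FD_le D_le
    by (metis F_def order_antisym)
  have least: "\<forall>d'. is_fixpoint_pm \<Lambda> Bxi \<tau> \<alpha> d' \<longrightarrow> (\<forall>s t. D s t \<le> d' s t)"
  proof (intro allI impI)
    fix d' s t assume "is_fixpoint_pm \<Lambda> Bxi \<tau> \<alpha> d'"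
    then have "d' \<in> Q" unfolding Q_def is_fixpoint_pm_def F_def by auto
    then show "D s t \<le> d' s t" by (rule Dle)
  qed
  show ?thesis using fixD least by blast
qed

lemma sem_nonexp:
  assumes t01: "\<forall>l\<in>\<Lambda>. \<forall>b. \<tau> l b \<in> {0..1}"
    and fp: "is_fixpoint_pm \<Lambda> Bxi \<tau> \<alpha> d"
  shows "wf_form \<Lambda> \<phi> \<Longrightarrow> nonexp d (sem Bxi \<tau> \<alpha> \<phi>)"
proof (induction \<phi>)
  have b: "bpm d" using fp by (simp add: is_fixpoint_pm_def)
  then have d0: "\<forall>x y. 0 \<le> d x y" by (simp add: bpm_def)
  case FTop then show ?case using d0 by (simp add: nonexp_def)
next
  case (FNeg \<phi>) then show ?case by (auto simp: nonexp_def abs_minus_commute image_subset_iff)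
next
  case (FMin \<phi> \<psi>)
  then have a: "nonexp d (sem Bxi \<tau> \<alpha> \<phi>)" "nonexp d (sem Bxi \<tau> \<alpha> \<psi>)" by auto
  show ?case unfolding nonexp_def
  proof
    show "range (sem Bxi \<tau> \<alpha> (FMin \<phi> \<psi>)) \<subseteq> {0..1}"
      using a by (auto simp: nonexp_def image_subset_iff min_def)
    show "\<forall>x y. \<bar>sem Bxi \<tau> \<alpha> (FMin \<phi> \<psi>) x - sem Bxi \<tau> \<alpha> (FMin \<phi> \<psi>) y\<bar> \<le> d x y"
    proof (intro allI)
      fix x y
      have "\<bar>sem Bxi \<tau> \<alpha> \<phi> x - sem Bxi \<tau> \<alpha> \<phi> y\<bar> \<le> d x y"
           "\<bar>sem Bxi \<tau> \<alpha> \<psi> x - sem Bxi \<tau> \<alpha> \<psi> y\<bar> \<le> d x y"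
        using a by (auto simp: nonexp_def)
      then show "\<bar>sem Bxi \<tau> \<alpha> (FMin \<phi> \<psi>) x - sem Bxi \<tau> \<alpha> (FMin \<phi> \<psi>) y\<bar> \<le> d x y"
        by (simp add: min_def abs_le_iff)
    qed
  qed
next
  case (FMinus q \<phi>)
  then have a: "nonexp d (sem Bxi \<tau> \<alpha> \<phi>)" and q: "0 \<le> q" "q \<le> 1" by auto
  have q': "0 \<le> real_of_rat q" "real_of_rat q \<le> 1" using q
    by (simp_all add: zero_le_of_rat_iff of_rat_le_1_iff)
  show ?case unfolding nonexp_def
  proof
    show "range (sem Bxi \<tau> \<alpha> (FMinus q \<phi>)) \<subseteq> {0..1}"
    proof (rule image_subsetI)
      fix x
      have "sem Bxi \<tau> \<alpha> \<phi> x \<in> {0..1}" using a by (auto simp: nonexp_def image_subset_iff)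
      then show "sem Bxi \<tau> \<alpha> (FMinus q \<phi>) x \<in> {0..1}"
        unfolding sem.simps max_def atLeastAtMost_iff using q' by (split if_split) linarith
    qed
    show "\<forall>x y. \<bar>sem Bxi \<tau> \<alpha> (FMinus q \<phi>) x - sem Bxi \<tau> \<alpha> (FMinus q \<phi>) y\<bar> \<le> d x y"
    proof (intro allI)
      fix x y
      have "\<bar>sem Bxi \<tau> \<alpha> \<phi> x - sem Bxi \<tau> \<alpha> \<phi> y\<bar> \<le> d x y"
        using a by (auto simp: nonexp_def)
      then show "\<bar>sem Bxi \<tau> \<alpha> (FMinus q \<phi>) x - sem Bxi \<tau> \<alpha> (FMinus q \<phi>) y\<bar> \<le> d x y"
        by (simp add: max_def abs_le_iff)
    qed
  qed
next
  case (FMod l \<phi>)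
  have b: "bpm d" using fp by (simp add: is_fixpoint_pm_def)
  then have d0: "\<forall>x y. 0 \<le> d x y" by (simp add: bpm_def)
  from FMod have a: "nonexp d (sem Bxi \<tau> \<alpha> \<phi>)" and l: "l \<in> \<Lambda>" by auto
  show ?case unfolding nonexp_def
  proof
    show "range (sem Bxi \<tau> \<alpha> (FMod l \<phi>)) \<subseteq> {0..1}"
      using t01 l by auto
    show "\<forall>x y. \<bar>sem Bxi \<tau> \<alpha> (FMod l \<phi>) x - sem Bxi \<tau> \<alpha> (FMod l \<phi>) y\<bar> \<le> d x y"
    proof (intro allI)
      fix x y
      have "\<bar>sem Bxi \<tau> \<alpha> (FMod l \<phi>) x - sem Bxi \<tau> \<alpha> (FMod l \<phi>) y\<bar>
            \<le> lift_dist \<Lambda> Bxi \<tau> d (\<alpha> x) (\<alpha> y)"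
        using lift_facts(1)[OF t01 d0 l a] by simp
      also have "\<dots> = d x y" using fp by (simp add: is_fixpoint_pm_def)
      finally show "\<bar>sem Bxi \<tau> \<alpha> (FMod l \<phi>) x - sem Bxi \<tau> \<alpha> (FMod l \<phi>) y\<bar> \<le> d x y" .
    qed
  qed
qed

theorem corollaryV2:
  fixes Bxx :: "('x \<Rightarrow> 'x) \<Rightarrow> 'bx \<Rightarrow> 'bx"
    and Bxi :: "('x \<Rightarrow> real) \<Rightarrow> 'bx \<Rightarrow> 'bi"
    and Bii :: "(real \<Rightarrow> real) \<Rightarrow> 'bi \<Rightarrow> 'bi"
    and \<Lambda> :: "'l set"
    and \<tau> :: "'l \<Rightarrow> 'bi \<Rightarrow> real"
    and \<alpha> :: "'x \<Rightarrow> 'bx"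
    and s t :: 'x
  assumes "is_functor_restr Bxx Bxi Bii"
    and "\<forall>l\<in>\<Lambda>. \<forall>b. \<tau> l b \<in> {0..1}"
  shows "behav_dist \<Lambda> Bxi \<tau> \<alpha> s t \<ge> logic_dist \<Lambda> Bxi \<tau> \<alpha> s t"
proof -
  let ?P = "\<lambda>d. is_fixpoint_pm \<Lambda> Bxi \<tau> \<alpha> d \<and>
      (\<forall>d'. is_fixpoint_pm \<Lambda> Bxi \<tau> \<alpha> d' \<longrightarrow> (\<forall>s t. d s t \<le> d' s t))"
  obtain D where D: "?P D" using least_fix_exists[OF assms(2)] by blast
  have uniq: "d = D" if "?P d" for d
  proof -
    have "\<forall>s t. d s t \<le> D s t" "\<forall>s t. D s t \<le> d s t" using that D by auto
    then show ?thesis by (intro ext) (meson order_antisym)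
  qed
  have "behav_dist \<Lambda> Bxi \<tau> \<alpha> = D"
    unfolding behav_dist_def by (rule the_equality) (use D uniq in blast)+
  moreover have "logic_dist \<Lambda> Bxi \<tau> \<alpha> s t \<le> D s t"
    unfolding logic_dist_def
  proof (rule cSUP_least)
    show "{\<phi>. wf_form \<Lambda> \<phi>} \<noteq> {}" by (auto intro: exI[of _ FTop])
    fix \<phi> assume "\<phi> \<in> {\<phi>. wf_form \<Lambda> \<phi>}"
    then have "nonexp D (sem Bxi \<tau> \<alpha> \<phi>)" using sem_nonexp[OF assms(2)] D by auto
    then show "\<bar>sem Bxi \<tau> \<alpha> \<phi> s - sem Bxi \<tau> \<alpha> \<phi> t\<bar> \<le> D s t" by (simp add: nonexp_def)
  qed
  ultimately show ?thesis by simp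
qed

end
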